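(* The cut rule is admissible in ${\sf GWF^s_{N_2}}$: for all $D,Z\in{\sf Frm_2}$ and finite multisets $\Gamma,\Gamma'$ of ${\sf Frm_2}$-formulas, if $\Gamma\Rightarrow D$ and $D,\Gamma'\Rightarrow Z$ are derivable in ${\sf GWF^s_{N_2}}$, then $\Gamma,\Gamma'\Rightarrow Z$ is derivable in ${\sf GWF^s_{N_2}}$.
   Context: Language: countably many atoms $p,q,\dots$, the constant $\bot$, and binary connectives $\wedge,\vee,\rightarrow$ ($\rightarrow$ is strict implication). ${\sf Frm}$ is the set of formulas built from atoms and $\bot$ with $\wedge,\vee,\rightarrow$; $A,B,C,D$ range over ${\sf Frm}$. Let $\supset$ be a new binary symbol (material implication) and ${\sf Frm_1}={\sf Frm}\cup\{A\supset B : A,B\in{\sf Frm}\}$ (no nesting of $\supset$). ${\sf Frm_2}$ is the smallest set containing ${\sf Frm_1}$ and closed under $\wedge$ and $\vee$; $X,Y,Z$ range over ${\sf Frm_2}$. A single-succedent sequent is $\Gamma\Rightarrow Z$ with $\Gamma$ a finite multiset of ${\sf Frm_2}$-formulas and $Z\in{\sf Frm_2}$. The calculus ${\sf GWF^s_{N_2}}$ has initial sequents $(id^s)$ $p,\Gamma\Rightarrow p$ ($p$ an atom) and $(L^s_\bot)$ $\bot,\Gamma\Rightarrow Z$, and rules (premises / conclusion): $(L^s_\wedge)$ $X,Y,\Gamma\Rightarrow Z$ / $X\wedge Y,\Gamma\Rightarrow Z$; $(R^s_\wedge)$ $\Gamma\Rightarrow X$ and $\Gamma\Rightarrow Y$ /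 $\Gamma\Rightarrow X\wedge Y$; $(L^s_\vee)$ $X,\Gamma\Rightarrow Z$ and $Y,\Gamma\Rightarrow Z$ / $X\vee Y,\Gamma\Rightarrow Z$; $(R^s_{\vee_l})$ $\Gamma\Rightarrow X$ / $\Gamma\Rightarrow X\vee Y$; $(R^s_{\vee_r})$ $\Gamma\Rightarrow Y$ / $\Gamma\Rightarrow X\vee Y$; $(L^s_\supset)$ $A\supset B,\Gamma\Rightarrow A$ and $B,\Gamma\Rightarrow Z$ / $A\supset B,\Gamma\Rightarrow Z$; $(R^s_\supset)$ $A,\Gamma\Rightarrow B$ / $\Gamma\Rightarrow A\supset B$; $(LR^s_\rightarrow)$ $C\supset D,A\Rightarrow B$ / $\Gamma,C\rightarrow D\Rightarrow A\rightarrow B$; $(R^s_\rightarrow)$ $A\Rightarrow B$ / $\Gamma\Rightarrow A\rightarrow B$. Here $A,B,C,D\in{\sf Frm}$, $X,Y,Z\in{\sf Frm_2}$, $\Gamma$ an arbitrary finite multiset of ${\sf Frm_2}$-formulas. *)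

theory Defs
  imports Main "HOL-Library.Multiset"
begin

(* Raw syntax: one datatype; Frm and Frm2 are carved out by predicates, so every
   formula has a unique representation (A /\ B with A,B in Frm is the same object
   whether viewed in Frm or Frm2). SImp = strict implication (->), MImp = material (\<supset>). *)
datatype form = Atom nat | Bot | Conj form form | Disj form form
  | SImp form form | MImp form form

fun isFrm :: "form \<Rightarrow> bool" where
  "isFrm (Atom p) = True"
| "isFrm Bot = True"
| "isFrm (Conj A B) = (isFrm A \<and> isFrm B)"
| "isFrm (Disj A B) = (isFrm A \<and> isFrm B)"
| "isFrm (SImp A B) = (isFrm A \<and> isFrm B)"
| "isFrm (MImp A B) = False"

(* Frm2: smallest set containing Frm1 = Frm \<union> {A \<supset> B} and closed under /\ , \/ *)
fun isFrm2 :: "form \<Rightarrow> bool" where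
  "isFrm2 (Atom p) = True"
| "isFrm2 Bot = True"
| "isFrm2 (Conj X Y) = (isFrm2 X \<and> isFrm2 Y)"
| "isFrm2 (Disj X Y) = (isFrm2 X \<and> isFrm2 Y)"
| "isFrm2 (SImp A B) = (isFrm A \<and> isFrm B)"
| "isFrm2 (MImp A B) = (isFrm A \<and> isFrm B)"

definition wf_ctx :: "form multiset \<Rightarrow> bool" where
  "wf_ctx \<Gamma> \<longleftrightarrow> (\<forall>X\<in>#\<Gamma>. isFrm2 X)"

inductive deriv :: "form multiset \<Rightarrow> form \<Rightarrow> bool" where
  idS: "wf_ctx \<Gamma> \<Longrightarrow> deriv (add_mset (Atom p) \<Gamma>) (Atom p)"
| LBot: "wf_ctx \<Gamma> \<Longrightarrow> isFrm2 Z \<Longrightarrow> deriv (add_mset Bot \<Gamma>) Z"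
| LConj: "deriv (add_mset X (add_mset Y \<Gamma>)) Z \<Longrightarrow> deriv (add_mset (Conj X Y) \<Gamma>) Z"
| RConj: "deriv \<Gamma> X \<Longrightarrow> deriv \<Gamma> Y \<Longrightarrow> deriv \<Gamma> (Conj X Y)"
| LDisj: "deriv (add_mset X \<Gamma>) Z \<Longrightarrow> deriv (add_mset Y \<Gamma>) Z
          \<Longrightarrow> deriv (add_mset (Disj X Y) \<Gamma>) Z"
| RDisjL: "deriv \<Gamma> X \<Longrightarrow> isFrm2 Y \<Longrightarrow> deriv \<Gamma> (Disj X Y)"
| RDisjR: "deriv \<Gamma> Y \<Longrightarrow> isFrm2 X \<Longrightarrow> deriv \<Gamma> (Disj X Y)"
| LMImp: "isFrm A \<Longrightarrow> isFrm B \<Longrightarrow> deriv (add_mset (MImp A B) \<Gamma>) A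
          \<Longrightarrow> deriv (add_mset B \<Gamma>) Z \<Longrightarrow> deriv (add_mset (MImp A B) \<Gamma>) Z"
| RMImp: "isFrm A \<Longrightarrow> isFrm B \<Longrightarrow> deriv (add_mset A \<Gamma>) B \<Longrightarrow> deriv \<Gamma> (MImp A B)"
| LRSImp: "isFrm A \<Longrightarrow> isFrm B \<Longrightarrow> isFrm C \<Longrightarrow> isFrm D \<Longrightarrow> wf_ctx \<Gamma>
          \<Longrightarrow> deriv {#MImp C D, A#} B \<Longrightarrow> deriv (add_mset (SImp C D) \<Gamma>) (SImp A B)"
| RSImp: "isFrm A \<Longrightarrow> isFrm B \<Longrightarrow> wf_ctx \<Gamma>
          \<Longrightarrow> deriv {#A#} B \<Longrightarrow> deriv \<Gamma> (SImp A B)"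

end

theory Submission
  imports Defs
begin

lemma frm_frm2: "isFrm A \<Longrightarrow> isFrm2 A"
  by (induction A) auto

lemma deriv_wf: "deriv \<Gamma> Z \<Longrightarrow> wf_ctx \<Gamma> \<and> isFrm2 Z"
  by (induction rule: deriv.induct) (auto simp: wf_ctx_def frm_frm2)

lemma madd: "add_mset a M = add_mset b N \<Longrightarrow> a \<noteq> b \<Longrightarrow> \<exists>K. M = add_mset b K \<and> N = add_mset a K"
proof -
  assume e: "add_mset a M = add_mset b N" and n: "a \<noteq> b"
  have h: "M = add_mset b (N - {#a#})" "N = add_mset a (M - {#b#})"
    using add_eq_conv_diff[THEN iffD1, OF e] n by blast+
  have "b \<in># M" by (subst h(1)) simp
  then have "M = add_mset b (M - {#b#})" by (rule insert_DiffM[symmetric])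
  then show ?thesis using h(2) by blast
qed

lemma wf_plus: "wf_ctx \<Gamma> \<Longrightarrow> wf_ctx \<Delta> \<Longrightarrow> wf_ctx (\<Gamma> + \<Delta>)"
  by (auto simp: wf_ctx_def)

lemma wf_add: "wf_ctx (add_mset X \<Gamma>) \<longleftrightarrow> isFrm2 X \<and> wf_ctx \<Gamma>"
  by (auto simp: wf_ctx_def)


lemma mem_other: "add_mset a M = add_mset b N \<Longrightarrow> a \<noteq> b \<Longrightarrow> b \<in># M"
  using madd by fastforce

lemma wf_from: "add_mset a M = add_mset b N \<Longrightarrow> isFrm2 a \<Longrightarrow> wf_ctx M \<Longrightarrow> wf_ctx N"
  unfolding wf_ctx_def
proof
  fix x assume e: "add_mset a M = add_mset b N" and h: "isFrm2 a" "\<forall>X\<in>#M. isFrm2 X" and x: "x \<in># N"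
  then have "x \<in># add_mset a M" by simp
  then show "isFrm2 x" using h by auto
qed

lemma wf_diff: "wf_ctx \<Gamma> \<Longrightarrow> wf_ctx (\<Gamma> - {#X#})"
  unfolding wf_ctx_def by (meson in_diffD)

lemma use_mem: "X \<in># \<Gamma> \<Longrightarrow> wf_ctx \<Gamma> \<Longrightarrow> (\<And>\<Delta>. wf_ctx \<Delta> \<Longrightarrow> deriv (add_mset X \<Delta>) Z) \<Longrightarrow> deriv \<Gamma> Z"
  using wf_diff insert_DiffM by metis

lemma weak: "deriv \<Gamma> Z \<Longrightarrow> wf_ctx \<Delta> \<Longrightarrow> deriv (\<Gamma> + \<Delta>) Z"
proof (induction arbitrary: \<Delta> rule: deriv.induct)
  case (idS \<Gamma> p)
  then show ?case using deriv.idS[OF wf_plus[OF idS]] by simp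
next
  case (LBot \<Gamma> Z)
  then show ?case using deriv.LBot[OF wf_plus[OF LBot(1,3)] LBot(2)] by simp
next
  case (LConj X Y \<Gamma> Z)
  then show ?case using deriv.LConj[of X Y "\<Gamma>+\<Delta>" Z] by simp
next
  case (LDisj X \<Gamma> Z Y)
  then show ?case using deriv.LDisj[of X "\<Gamma>+\<Delta>" Z Y] by simp
next
  case (LMImp A B \<Gamma> Z)
  then show ?case using deriv.LMImp[of A B "\<Gamma>+\<Delta>" Z] by simp
next
  case (RMImp A B \<Gamma>)
  then show ?case using deriv.RMImp[of A B "\<Gamma>+\<Delta>"] by simp
next
  case (LRSImp A B C D \<Gamma>)
  then show ?case using deriv.LRSImp[OF LRSImp(1-4) wf_plus[OF LRSImp(5,8)] LRSImp(6)] by simp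
next
  case (RSImp A B \<Gamma>)
  then show ?case using deriv.RSImp[OF RSImp(1,2) wf_plus[OF RSImp(3,6)] RSImp(4)] by simp
qed (auto intro: deriv.intros)

lemma weak1: "deriv \<Gamma> Z \<Longrightarrow> isFrm2 X \<Longrightarrow> deriv (add_mset X \<Gamma>) Z"
  using weak[of \<Gamma> Z "{#X#}"] by (simp add: wf_ctx_def)

lemma invL:
  assumes "deriv \<Pi> Z" "\<Pi> = add_mset F \<Gamma>" "wf_ctx R"
    and nA: "\<And>p. F \<noteq> Atom p" and nB: "F \<noteq> Bot" and nS: "\<And>A B. F \<noteq> SImp A B"
    and hC: "\<And>X Y \<Gamma> Z. F = Conj X Y \<Longrightarrow> deriv (add_mset X (add_mset Y \<Gamma>)) Z \<Longrightarrow> deriv (R + \<Gamma>) Z"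
    and hD: "\<And>X Y \<Gamma> Z. F = Disj X Y \<Longrightarrow> deriv (add_mset X \<Gamma>) Z \<Longrightarrow> deriv (add_mset Y \<Gamma>) Z \<Longrightarrow> deriv (R + \<Gamma>) Z"
    and hM: "\<And>A B \<Gamma> Z. F = MImp A B \<Longrightarrow> deriv (R + \<Gamma>) A \<Longrightarrow> deriv (add_mset B \<Gamma>) Z \<Longrightarrow> deriv (R + \<Gamma>) Z"
  shows "deriv (R + \<Gamma>) Z"
  using assms(1,2)
proof (induction arbitrary: \<Gamma> rule: deriv.induct)
  case (idS \<Delta> p)
  then obtain K where K: "\<Delta> = add_mset F K" "\<Gamma> = add_mset (Atom p) K" using madd nA by metis
  with idS assms(3) have "wf_ctx (R + K)" by (auto simp: wf_add wf_plus)
  from deriv.idS[OF this, of p] show ?case using K by (simp add: add_mset_commute)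
next
  case (LBot \<Delta> Z)
  then obtain K where K: "\<Delta> = add_mset F K" "\<Gamma> = add_mset Bot K" using madd nB by metis
  with LBot assms(3) have "wf_ctx (R + K)" by (auto simp: wf_add wf_plus)
  from deriv.LBot[OF this LBot(2)] show ?case using K by (simp add: add_mset_commute)
next
  case (LConj X' Y' \<Delta> Z)
  show ?case
  proof (cases "Conj X' Y' = F")
    case True
    then show ?thesis using LConj hC by auto
  next
    case False
    then obtain K where K: "\<Delta> = add_mset F K" "\<Gamma> = add_mset (Conj X' Y') K" using madd LConj(3) by metis
    have "deriv (R + (add_mset X' (add_mset Y' K))) Z"
      using LConj(2)[of "add_mset X' (add_mset Y' K)"] K by (simp add: add_mset_commute)
    from deriv.LConj[OF this[simplified]] show ?thesis using K by (simp add: add_mset_commute)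
  qed
next
  case (RConj \<Delta> A B)
  then show ?case by (blast intro: deriv.RConj)
next
  case (LDisj X' \<Delta> Z Y')
  show ?case
  proof (cases "Disj X' Y' = F")
    case True
    then show ?thesis using LDisj hD by auto
  next
    case False
    then obtain K where K: "\<Delta> = add_mset F K" "\<Gamma> = add_mset (Disj X' Y') K" using madd LDisj(5) by metis
    have "deriv (add_mset X' (R + K)) Z"
      using LDisj(3)[of "add_mset X' K"] K by (simp add: add_mset_commute)
    moreover have "deriv (add_mset Y' (R + K)) Z"
      using LDisj(4)[of "add_mset Y' K"] K by (simp add: add_mset_commute)
    ultimately show ?thesis using deriv.LDisj[of X' "R + K" Z Y'] K by (simp add: add_mset_commute)
  qed
next
  case (RDisjL \<Delta> A B)
  then show ?case by (blast intro: deriv.RDisjL)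
next
  case (RDisjR \<Delta> A B)
  then show ?case by (blast intro: deriv.RDisjR)
next
  case (LMImp A B \<Delta> Z)
  show ?case
  proof (cases "MImp A B = F")
    case True
    then show ?thesis using LMImp hM by auto
  next
    case False
    then obtain K where K: "\<Delta> = add_mset F K" "\<Gamma> = add_mset (MImp A B) K" using madd LMImp(7) by metis
    have "deriv (add_mset (MImp A B) (R + K)) A"
      using LMImp(5)[of "add_mset (MImp A B) K"] K by (simp add: add_mset_commute)
    moreover have "deriv (add_mset B (R + K)) Z"
      using LMImp(6)[of "add_mset B K"] K by (simp add: add_mset_commute)
    ultimately show ?thesis using deriv.LMImp[of A B "R + K" Z] K LMImp(1,2) by (simp add: add_mset_commute)
  qed
next
  case (RMImp A B \<Delta>)
  have "deriv (add_mset A (R + \<Gamma>)) B"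
    using RMImp(4)[of "add_mset A \<Gamma>"] RMImp(5) by (simp add: add_mset_commute)
  then show ?case using deriv.RMImp[OF RMImp(1,2)] by (simp add: add_mset_commute)
next
  case (LRSImp A B C D \<Delta>)
  then obtain K where K: "\<Delta> = add_mset F K" "\<Gamma> = add_mset (SImp C D) K" using madd nS by metis
  with LRSImp assms(3) have "wf_ctx (R + K)" by (auto simp: wf_add wf_plus)
  from deriv.LRSImp[OF LRSImp(1-4) this LRSImp(6)] show ?case using K by (simp add: add_mset_commute)
next
  case (RSImp A B \<Delta>)
  then have "wf_ctx (R + \<Gamma>)" using assms(3) by (auto simp: wf_add wf_plus)
  from deriv.RSImp[OF RSImp(1,2) this RSImp(4)] show ?case .
qed

lemma invDisjL: "deriv (add_mset (Disj X Y) \<Gamma>) Z \<Longrightarrow> deriv (add_mset X \<Gamma>) Z"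
proof -
  assume a: "deriv (add_mset (Disj X Y) \<Gamma>) Z"
  then have "isFrm2 X" using deriv_wf[OF a] by (auto simp: wf_add)
  then show ?thesis using invL[OF a refl, of "{#X#}"] by (auto simp: wf_ctx_def)
qed

lemma invDisjR: "deriv (add_mset (Disj X Y) \<Gamma>) Z \<Longrightarrow> deriv (add_mset Y \<Gamma>) Z"
proof -
  assume a: "deriv (add_mset (Disj X Y) \<Gamma>) Z"
  then have "isFrm2 Y" using deriv_wf[OF a] by (auto simp: wf_add)
  then show ?thesis using invL[OF a refl, of "{#Y#}"] by (auto simp: wf_ctx_def)
qed

lemma invMImpL: "deriv (add_mset (MImp A B) \<Gamma>) Z \<Longrightarrow> deriv (add_mset B \<Gamma>) Z"
proof -
  assume a: "deriv (add_mset (MImp A B) \<Gamma>) Z"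
  then have "isFrm2 B" using deriv_wf[OF a] by (auto simp: wf_add frm_frm2)
  then show ?thesis using invL[OF a refl, of "{#B#}"] by (auto simp: wf_ctx_def)
qed

lemma invConj: "deriv (add_mset (Conj X Y) \<Gamma>) Z \<Longrightarrow> deriv (add_mset X (add_mset Y \<Gamma>)) Z"
proof -
  assume a: "deriv (add_mset (Conj X Y) \<Gamma>) Z"
  then have "isFrm2 X" "isFrm2 Y" using deriv_wf[OF a] by (auto simp: wf_add)
  then show ?thesis using invL[OF a refl, of "{#X,Y#}"] by (auto simp: wf_ctx_def)
qed

lemma invRConj: "deriv \<Gamma> W \<Longrightarrow> W = Conj X Y \<Longrightarrow> deriv \<Gamma> X \<and> deriv \<Gamma> Y"
proof (induction rule: deriv.induct)
  case (LBot \<Gamma> Z)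
  then show ?case by (simp add: deriv.LBot)
next
  case (LConj X Y \<Gamma> Z)
  then show ?case by (simp add: deriv.LConj)
next
  case (LDisj X \<Gamma> Z Y)
  then show ?case by (simp add: deriv.LDisj)
next
  case (LMImp A B \<Gamma> Z)
  then show ?case by (simp add: deriv.LMImp)
qed simp_all

lemma invRMImp: "deriv \<Gamma> W \<Longrightarrow> W = MImp A B \<Longrightarrow> deriv (add_mset A \<Gamma>) B"
proof (induction rule: deriv.induct)
  case (LBot \<Gamma> Z)
  then show ?case using deriv.LBot[of "add_mset A \<Gamma>" B] by (auto simp: wf_add frm_frm2 add_mset_commute)
next
  case (LConj X Y \<Gamma> Z)
  then show ?case using deriv.LConj[of X Y "add_mset A \<Gamma>" B] by (auto simp: add_mset_commute)
next
  case (LDisj X \<Gamma> Z Y)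
  then show ?case using deriv.LDisj[of X "add_mset A \<Gamma>" B Y] by (auto simp: add_mset_commute)
next
  case (LMImp A' B' \<Gamma> Z)
  have "deriv (add_mset A (add_mset (MImp A' B') \<Gamma>)) A'"
    using weak1[OF LMImp(3)] LMImp(7) deriv_wf[OF LMImp(4)] by (auto simp: frm_frm2)
  then show ?case using LMImp deriv.LMImp[of A' B' "add_mset A \<Gamma>" B] by (auto simp: add_mset_commute)
qed auto

lemma contrAt: "deriv \<Pi> Z \<Longrightarrow> \<Pi> = add_mset (Atom q) \<Gamma> \<Longrightarrow> Atom q \<in># \<Gamma> \<Longrightarrow> deriv \<Gamma> Z"
proof (induction arbitrary: \<Gamma> rule: deriv.induct)
  case (idS \<Delta> p)
  have "Atom p \<in># \<Gamma>" using idS mem_other[of "Atom q" \<Gamma> "Atom p" \<Delta>] by (cases "p = q") auto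
  moreover have "wf_ctx \<Gamma>" using idS wf_from[of "Atom p" \<Delta> "Atom q" \<Gamma>] by simp
  ultimately show ?case by (rule use_mem) (rule deriv.idS)
next
  case (LBot \<Delta> Z)
  have "Bot \<in># \<Gamma>" using LBot mem_other[of "Atom q" \<Gamma> Bot \<Delta>] by auto
  moreover have "wf_ctx \<Gamma>" using LBot wf_from[of Bot \<Delta> "Atom q" \<Gamma>] by simp
  ultimately show ?case by (rule use_mem) (rule deriv.LBot[OF _ LBot(2)])
next
  case (LConj X' Y' \<Delta> Z)
  obtain K where K: "\<Delta> = add_mset (Atom q) K" "\<Gamma> = add_mset (Conj X' Y') K" using madd[OF LConj(3)] by auto
  have e: "add_mset X' (add_mset Y' \<Delta>) = add_mset (Atom q) (add_mset X' (add_mset Y' K))"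
    using K(1) by (simp add: add_mset_commute)
  have m: "Atom q \<in># add_mset X' (add_mset Y' K)" using K(2) LConj(4) by simp
  have "deriv (add_mset X' (add_mset Y' K)) Z" using LConj(2)[OF e m] .
  from deriv.LConj[OF this] show ?case using K by (simp add: add_mset_commute)
next
  case (RConj \<Delta> A B)
  then show ?case by (blast intro: deriv.RConj)
next
  case (LDisj X' \<Delta> Z Y')
  obtain K where K: "\<Delta> = add_mset (Atom q) K" "\<Gamma> = add_mset (Disj X' Y') K" using madd[OF LDisj(5)] by auto
  have "deriv (add_mset X' K) Z"
    using LDisj(3)[of "add_mset X' K"] K LDisj(6) by (simp add: add_mset_commute)
  moreover have "deriv (add_mset Y' K) Z"
    using LDisj(4)[of "add_mset Y' K"] K LDisj(6) by (simp add: add_mset_commute)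
  ultimately show ?case using deriv.LDisj[of X' K Z Y'] K by simp
next
  case (RDisjL \<Delta> A B)
  then show ?case by (blast intro: deriv.RDisjL)
next
  case (RDisjR \<Delta> A B)
  then show ?case by (blast intro: deriv.RDisjR)
next
  case (LMImp A B \<Delta> Z)
  obtain K where K: "\<Delta> = add_mset (Atom q) K" "\<Gamma> = add_mset (MImp A B) K" using madd[OF LMImp(7)] by auto
  have "deriv (add_mset (MImp A B) K) A"
    using LMImp(5)[of "add_mset (MImp A B) K"] K LMImp(8) by (simp add: add_mset_commute)
  moreover have "deriv (add_mset B K) Z"
    using LMImp(6)[of "add_mset B K"] K LMImp(8) by (simp add: add_mset_commute)
  ultimately show ?case using deriv.LMImp[of A B K Z] K LMImp(1,2) by simp
next
  case (RMImp A B \<Delta>)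
  have e: "add_mset A \<Delta> = add_mset (Atom q) (add_mset A \<Gamma>)"
    using RMImp(5) by (simp add: add_mset_commute)
  have m: "Atom q \<in># add_mset A \<Gamma>" using RMImp(6) by simp
  have "deriv (add_mset A \<Gamma>) B" using RMImp(4)[OF e m] .
  then show ?case using deriv.RMImp[OF RMImp(1,2)] by simp
next
  case (LRSImp A B C D \<Delta>)
  have "SImp C D \<in># \<Gamma>" using LRSImp mem_other[of "Atom q" \<Gamma> "SImp C D" \<Delta>] by auto
  moreover have "wf_ctx \<Gamma>" using LRSImp wf_from[of "SImp C D" \<Delta> "Atom q" \<Gamma>] by simp
  ultimately show ?case by (rule use_mem) (rule deriv.LRSImp[OF LRSImp(1-4) _ LRSImp(6)])
next
  case (RSImp A B \<Delta>)
  then have "wf_ctx \<Gamma>" by (simp add: wf_add)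
  from deriv.RSImp[OF RSImp(1,2) this RSImp(4)] show ?case .
qed

fun w :: "form \<Rightarrow> nat" where
  "w (Atom p) = 1"
| "w Bot = 1"
| "w (Conj A B) = w A + w B + 1"
| "w (Disj A B) = w A + w B + 1"
| "w (MImp A B) = w A + w B + 1"
| "w (SImp A B) = w A + w B + 2"

definition cutP :: "form \<Rightarrow> bool" where
  "cutP D \<longleftrightarrow> (\<forall>\<Gamma> Z. deriv \<Gamma> D \<longrightarrow> deriv (add_mset D \<Gamma>) Z \<longrightarrow> deriv \<Gamma> Z)"

lemma cutPD: "cutP D \<Longrightarrow> deriv \<Gamma> D \<Longrightarrow> deriv (add_mset D \<Gamma>) Z \<Longrightarrow> deriv \<Gamma> Z"
  unfolding cutP_def by blast

lemma SP:
  assumes IH: "cutP (MImp A B)"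
  shows "deriv \<Gamma> W \<Longrightarrow> W = SImp A B \<Longrightarrow> deriv {#MImp A B, E#} F \<Longrightarrow> isFrm E \<Longrightarrow> isFrm F
    \<Longrightarrow> deriv \<Gamma> (SImp E F)"
proof (induction rule: deriv.induct)
  case (LBot \<Gamma> Z)
  then show ?case by (simp add: deriv.LBot)
next
  case (LConj X Y \<Gamma> Z)
  then show ?case by (simp add: deriv.LConj)
next
  case (LDisj X \<Gamma> Z Y)
  then show ?case by (simp add: deriv.LDisj)
next
  case (LMImp A' B' \<Gamma> Z)
  then show ?case by (simp add: deriv.LMImp)
next
  case (LRSImp A0 B0 C D \<Gamma>)
  then have AB: "A0 = A" "B0 = B" by auto
  have "deriv {#MImp C D#} (MImp A B)"
    using deriv.RMImp[of A B "{#MImp C D#}"] LRSImp AB by (auto simp: add_mset_commute)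
  then have l: "deriv {#MImp C D, E#} (MImp A B)"
    using weak1[of "{#MImp C D#}" "MImp A B" E] LRSImp(10) by (auto simp: frm_frm2 add_mset_commute)
  have r: "deriv (add_mset (MImp A B) {#MImp C D, E#}) F"
    using weak1[OF LRSImp(9), of "MImp C D"] LRSImp(3,4) by (auto simp: add_mset_commute)
  have "deriv {#MImp C D, E#} F" using cutPD[OF IH l r] .
  then show ?case using deriv.LRSImp[OF LRSImp(10,11,3,4,5)] by simp
next
  case (RSImp A0 B0 \<Gamma>)
  then have AB: "A0 = A" "B0 = B" by auto
  have "deriv {#} (MImp A B)"
    using deriv.RMImp[of A B "{#}"] RSImp AB by auto
  then have l: "deriv {#E#} (MImp A B)"
    using weak1[of "{#}" "MImp A B" E] RSImp(8) by (auto simp: frm_frm2)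
  have "deriv {#E#} F" using cutPD[OF IH l] RSImp(7) by simp
  then show ?case using deriv.RSImp[OF RSImp(8,9,3)] by simp
qed auto

lemma RI:
  assumes DI: "D = MImp A B \<or> D = SImp A B"
    and hM: "D = MImp A B \<Longrightarrow> cutP A \<and> cutP B"
    and hS: "D = SImp A B \<Longrightarrow> cutP (MImp A B)"
  shows "deriv \<Pi> Z \<Longrightarrow> \<Pi> = add_mset D \<Gamma> \<Longrightarrow> deriv \<Gamma> D \<Longrightarrow> deriv \<Gamma> Z"
proof (induction arbitrary: \<Gamma> rule: deriv.induct)
  case (idS \<Delta> p)
  have "Atom p \<noteq> D" using DI by auto
  then have "Atom p \<in># \<Gamma>" using idS mem_other[of D \<Gamma> "Atom p" \<Delta>] by simp
  moreover have "wf_ctx \<Gamma>" using deriv_wf[OF idS(3)] by simp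
  ultimately show ?case by (rule use_mem) (rule deriv.idS)
next
  case (LBot \<Delta> Z)
  have "Bot \<noteq> D" using DI by auto
  then have "Bot \<in># \<Gamma>" using LBot mem_other[of D \<Gamma> Bot \<Delta>] by simp
  moreover have "wf_ctx \<Gamma>" using deriv_wf[OF LBot(4)] by simp
  ultimately show ?case by (rule use_mem) (rule deriv.LBot[OF _ LBot(2)])
next
  case (LConj X' Y' \<Delta> Z)
  have "Conj X' Y' \<noteq> D" using DI by auto
  then obtain K where K: "\<Delta> = add_mset D K" "\<Gamma> = add_mset (Conj X' Y') K" using madd LConj(3) by metis
  have l: "deriv (add_mset X' (add_mset Y' K)) D" using invConj LConj(4) K by simp
  have "deriv (add_mset X' (add_mset Y' K)) Z"
    using LConj(2)[OF _ l] K by (simp add: add_mset_commute)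
  from deriv.LConj[OF this] show ?case using K by simp
next
  case (RConj \<Delta> A B)
  then show ?case by (blast intro: deriv.RConj)
next
  case (LDisj X' \<Delta> Z Y')
  have "Disj X' Y' \<noteq> D" using DI by auto
  then obtain K where K: "\<Delta> = add_mset D K" "\<Gamma> = add_mset (Disj X' Y') K" using madd LDisj(5) by metis
  have l1: "deriv (add_mset X' K) D" using invDisjL LDisj(6) K by simp
  have l2: "deriv (add_mset Y' K) D" using invDisjR LDisj(6) K by simp
  have "deriv (add_mset X' K) Z"
    using LDisj(3)[OF _ l1] K by (simp add: add_mset_commute)
  moreover have "deriv (add_mset Y' K) Z"
    using LDisj(4)[OF _ l2] K by (simp add: add_mset_commute)
  ultimately show ?case using deriv.LDisj[of X' K Z Y'] K by simp
next
  case (RDisjL \<Delta> A B)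
  then show ?case by (blast intro: deriv.RDisjL)
next
  case (RDisjR \<Delta> A B)
  then show ?case by (blast intro: deriv.RDisjR)
next
  case (LMImp A' B' \<Delta> Z)
  show ?case
  proof (cases "MImp A' B' = D")
    case True
    then have e: "D = MImp A B" "A' = A" "B' = B" "\<Delta> = \<Gamma>" using DI LMImp(7) by auto
    have c: "cutP A" "cutP B" using hM e by auto
    have "deriv \<Gamma> A" using LMImp(5)[OF _ LMImp(8)] LMImp(7) e by simp
    moreover have "deriv (add_mset A \<Gamma>) B" using invRMImp[OF LMImp(8)] e by simp
    ultimately have "deriv \<Gamma> B" using cutPD[OF c(1)] by blast
    then show ?thesis using cutPD[OF c(2)] LMImp(4) e by blast
  next
    case False
    then obtain K where K: "\<Delta> = add_mset D K" "\<Gamma> = add_mset (MImp A' B') K" using madd LMImp(7) by metis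
    have l: "deriv (add_mset B' K) D" using invMImpL LMImp(8) K by simp
    have "deriv \<Gamma> A'" using LMImp(5)[OF _ LMImp(8)] LMImp(7) by simp
    moreover have "deriv (add_mset B' K) Z"
      using LMImp(6)[OF _ l] K by (simp add: add_mset_commute)
    ultimately show ?thesis using deriv.LMImp[of A' B' K Z] K LMImp(1,2) by simp
  qed
next
  case (RMImp A' B' \<Delta>)
  have l: "deriv (add_mset A' \<Gamma>) D" using weak1[OF RMImp(6)] RMImp(1) by (simp add: frm_frm2)
  have "deriv (add_mset A' \<Gamma>) B'"
    using RMImp(4)[OF _ l] RMImp(5) by (simp add: add_mset_commute)
  then show ?case using deriv.RMImp[OF RMImp(1,2)] by simp
next
  case (LRSImp A' B' C D' \<Delta>)
  show ?case
  proof (cases "SImp C D' = D")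
    case True
    then have e: "D = SImp A B" "C = A" "D' = B" "\<Delta> = \<Gamma>" using DI LRSImp(8) by auto
    show ?thesis using SP[OF hS[OF e(1)] LRSImp(9) e(1) _ LRSImp(1,2)] LRSImp(6) e by simp
  next
    case False
    then have "SImp C D' \<in># \<Gamma>" using LRSImp mem_other[of D \<Gamma> "SImp C D'" \<Delta>] by simp
    moreover have "wf_ctx \<Gamma>" using deriv_wf[OF LRSImp(9)] by simp
    ultimately show ?thesis by (rule use_mem) (rule deriv.LRSImp[OF LRSImp(1-4) _ LRSImp(6)])
  qed
next
  case (RSImp A' B' \<Delta>)
  have "wf_ctx \<Gamma>" using deriv_wf[OF RSImp(7)] by simp
  from deriv.RSImp[OF RSImp(1,2) this RSImp(4)] show ?case .
qed

lemma LI: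
  assumes nM: "\<And>A B. D \<noteq> MImp A B" and nS: "\<And>A B. D \<noteq> SImp A B"
    and hC: "\<And>X Y. D = Conj X Y \<Longrightarrow> cutP X \<and> cutP Y"
    and hD: "\<And>X Y. D = Disj X Y \<Longrightarrow> cutP X \<and> cutP Y"
  shows "deriv \<Gamma> W \<Longrightarrow> W = D \<Longrightarrow> deriv (add_mset D \<Gamma>) Z \<Longrightarrow> deriv \<Gamma> Z"
proof (induction arbitrary: Z rule: deriv.induct)
  case (idS \<Delta> p)
  then show ?case using contrAt[of "add_mset (Atom p) (add_mset (Atom p) \<Delta>)" Z p "add_mset (Atom p) \<Delta>"] by simp
next
  case (LBot \<Delta> Z0)
  then show ?case using deriv.LBot[OF LBot(1)] deriv_wf[OF LBot(4)] by simp
next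
  case (LConj X Y \<Delta> Z0)
  have "deriv (add_mset D (add_mset X (add_mset Y \<Delta>))) Z"
    using invConj[of X Y "add_mset D \<Delta>" Z] LConj(4) by (simp add: add_mset_commute)
  then show ?case using LConj(2)[OF LConj(3)] deriv.LConj by blast
next
  case (RConj \<Delta> X Y)
  have c: "cutP X" "cutP Y" using hC RConj(5) by auto
  have r: "deriv (add_mset Y (add_mset X \<Delta>)) Z" using invConj[of X Y \<Delta> Z] RConj(5,6) by (simp add: add_mset_commute)
  have l: "deriv (add_mset X \<Delta>) Y" using weak1[OF RConj(2)] deriv_wf[OF RConj(1)] by simp
  have "deriv (add_mset X \<Delta>) Z" using cutPD[OF c(2) l r] .
  then show ?case using cutPD[OF c(1) RConj(1)] by blast
next
  case (LDisj X \<Delta> Z0 Y)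
  have "deriv (add_mset D (add_mset X \<Delta>)) Z"
    using invDisjL[of X Y "add_mset D \<Delta>"] LDisj(6) by (simp add: add_mset_commute)
  moreover have "deriv (add_mset D (add_mset Y \<Delta>)) Z"
    using invDisjR[of X Y "add_mset D \<Delta>"] LDisj(6) by (simp add: add_mset_commute)
  ultimately show ?case using LDisj(3,4)[OF LDisj(5)] deriv.LDisj by blast
next
  case (RDisjL \<Delta> X Y)
  have c: "cutP X" using hD RDisjL(4) by auto
  have "deriv (add_mset X \<Delta>) Z" using invDisjL RDisjL(4,5) by blast
  then show ?case using cutPD[OF c RDisjL(1)] by blast
next
  case (RDisjR \<Delta> Y X)
  have c: "cutP Y" using hD RDisjR(4) by auto
  have "deriv (add_mset Y \<Delta>) Z" using invDisjR RDisjR(4,5) by blast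
  then show ?case using cutPD[OF c RDisjR(1)] by blast
next
  case (LMImp A B \<Delta> Z0)
  have "deriv (add_mset D (add_mset B \<Delta>)) Z"
    using invMImpL[of A B "add_mset D \<Delta>"] LMImp(8) by (simp add: add_mset_commute)
  then show ?case using LMImp(6)[OF LMImp(7)] deriv.LMImp[OF LMImp(1,2,3)] by blast
qed (metis nM nS)+

lemma cut_all: "cutP D"
proof (induction D rule: measure_induct_rule[of w])
  case (less D)
  show ?case unfolding cutP_def
  proof (intro allI impI)
    fix \<Gamma> Z assume l: "deriv \<Gamma> D" and r: "deriv (add_mset D \<Gamma>) Z"
    show "deriv \<Gamma> Z"
    proof (cases D)
      case (MImp A B)
      have h: "cutP A" "cutP B" using less MImp by simp_all
      show ?thesis by (rule RI[of D A B, OF _ _ _ r refl l]) (use MImp h in simp_all)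
    next
      case (SImp A B)
      have h: "cutP (MImp A B)" using less SImp by simp
      show ?thesis by (rule RI[of D A B, OF _ _ _ r refl l]) (use SImp h in simp_all)
    next
      case (Conj X Y)
      have h: "cutP X" "cutP Y" using less Conj by simp_all
      show ?thesis by (rule LI[of D, OF _ _ _ _ l refl r]) (use Conj h in simp_all)
    next
      case (Disj X Y)
      have h: "cutP X" "cutP Y" using less Disj by simp_all
      show ?thesis by (rule LI[of D, OF _ _ _ _ l refl r]) (use Disj h in simp_all)
    next
      case (Atom p)
      show ?thesis by (rule LI[of D, OF _ _ _ _ l refl r]) (use Atom in simp_all)
    next
      case Bot
      show ?thesis by (rule LI[of D, OF _ _ _ _ l refl r]) (use Bot in simp_all)
    qed
  qed
qed

theorem theorem5p3:
  assumes "isFrm2 D" and "isFrm2 Z" and "wf_ctx \<Gamma>" and "wf_ctx \<Gamma>'"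
    and "deriv \<Gamma> D" and "deriv (add_mset D \<Gamma>') Z"
  shows "deriv (\<Gamma> + \<Gamma>') Z"
proof -
  have l: "deriv (\<Gamma> + \<Gamma>') D" using weak[OF assms(5,4)] .
  have "deriv (add_mset D \<Gamma>' + \<Gamma>) Z" using weak[OF assms(6,3)] .
  then have r: "deriv (add_mset D (\<Gamma> + \<Gamma>')) Z" by (simp add: add.commute)
  show ?thesis using cutPD[OF cut_all l r] .
qed

end
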